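(* Let $SI$, $UI$, $CI$ be a nonnegative bivariate information decomposition. Define the extractable shared information $$\overline{SI}(S;X_1,X_2):=\sup_{f:\mathcal{S}\to\mathcal{S}'} SI(f(S);X_1,X_2),$$ the supremum being over all functions from the alphabet $\mathcal{S}$ of $S$ to an arbitrary finite set $\mathcal{S}'$, and define $$\overline{UI}^*(S;X_1\setminus X_2):=I(S;X_1)-\overline{SI}(S;X_1,X_2),\quad \overline{UI}^*(S;X_2\setminus X_1):=I(S;X_2)-\overline{SI}(S;X_1,X_2),$$ $$\overline{CI}^*(S;X_1,X_2):=I(S;X_1X_2)-\overline{SI}(S;X_1,X_2)-\overline{UI}^*(S;X_1\setminus X_2)-\overline{UI}^*(S;X_2\setminus X_1).$$ Then $\overline{SI}$, $\overline{UI}^*(S;X_1\setminus X_2)$, $\overline{UI}^*(S;X_2\setminus X_1)$ and $\overline{CI}^*$ are nonnegative, and moreover: (a) $\overline{SI}(S;X_1,X_2)\ge SI(S;X_1,X_2)$; (b) $\overline{CI}^*(S;X_1,X_2)\ge CI(S;X_1,X_2)$; (c) if $f^*$ is a function achieving the supremum in the definition of $\overline{SI}(S;X_1,X_2)$, then $UI(f^*(S);X_1\setminus X_2)\le \overline{UI}^*(S;X_1\setminus X_2)\le UI(S;X_1\setminus X_2)$.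
   Context: All random variables have finite alphabets. A nonnegative bivariate information decomposition consists of nonnegative functions $SI(S;X_1,X_2)$, $UI(S;X_1\setminus X_2)$, $UI(S;X_2\setminus X_1)$, $CI(S;X_1,X_2)$, defined for every joint distribution of $(S,X_1,X_2)$ with arbitrary finite alphabets and depending continuously on it, such that $I(S;X_1X_2)=SI(S;X_1,X_2)+CI(S;X_1,X_2)+UI(S;X_1\setminus X_2)+UI(S;X_2\setminus X_1)$, $I(S;X_1)=SI(S;X_1,X_2)+UI(S;X_1\setminus X_2)$ and $I(S;X_2)=SI(S;X_1,X_2)+UI(S;X_2\setminus X_1)$, where $I$ denotes mutual information and $I(S;X_1X_2)$ is the mutual information between $S$ and the pair $(X_1,X_2)$. *)

theory Defs
  imports "HOL-Probability.Probability"
begin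

definition mi :: "('a \<times> 'b) pmf \<Rightarrow> real" where
  "mi p = (\<Sum>(x, y)\<in>set_pmf p.
      pmf p (x, y) * log 2 (pmf p (x, y) / (pmf (map_pmf fst p) x * pmf (map_pmf snd p) y)))"

text \<open>Joint distributions of (S, X1, X2); finite alphabets are encoded as finite subsets of nat.\<close>
type_synonym dist3 = "(nat \<times> nat \<times> nat) pmf"

definition I_S_X1 :: "dist3 \<Rightarrow> real" where
  "I_S_X1 P = mi (map_pmf (\<lambda>(s, x1, x2). (s, x1)) P)"

definition I_S_X2 :: "dist3 \<Rightarrow> real" where
  "I_S_X2 P = mi (map_pmf (\<lambda>(s, x1, x2). (s, x2)) P)"

definition I_S_X12 :: "dist3 \<Rightarrow> real" where
  "I_S_X12 P = mi (map_pmf (\<lambda>(s, x1, x2). (s, (x1, x2))) P)"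

text \<open>Continuity: for every fixed finite alphabet, the functional depends continuously
  on the probability vector (product topology on functions).\<close>
definition cont_dist :: "(dist3 \<Rightarrow> real) \<Rightarrow> bool" where
  "cont_dist F \<longleftrightarrow> (\<forall>A. finite A \<longrightarrow>
      continuous_on (pmf ` {P. set_pmf P \<subseteq> A}) (\<lambda>q. F (embed_pmf q)))"

definition nonneg_decomp ::
  "(dist3 \<Rightarrow> real) \<Rightarrow> (dist3 \<Rightarrow> real) \<Rightarrow> (dist3 \<Rightarrow> real) \<Rightarrow> (dist3 \<Rightarrow> real) \<Rightarrow> bool" where
  "nonneg_decomp SI UI1 UI2 CI \<longleftrightarrow>
     (\<forall>P. finite (set_pmf P) \<longrightarrow>
        SI P \<ge> 0 \<and> UI1 P \<ge> 0 \<and> UI2 P \<ge> 0 \<and> CI P \<ge> 0 \<and>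
        I_S_X12 P = SI P + CI P + UI1 P + UI2 P \<and>
        I_S_X1 P = SI P + UI1 P \<and>
        I_S_X2 P = SI P + UI2 P) \<and>
     cont_dist SI \<and> cont_dist UI1 \<and> cont_dist UI2 \<and> cont_dist CI"

definition relabel :: "(nat \<Rightarrow> nat) \<Rightarrow> dist3 \<Rightarrow> dist3" where
  "relabel f P = map_pmf (\<lambda>(s, x1, x2). (f s, x1, x2)) P"

definition SIbar :: "(dist3 \<Rightarrow> real) \<Rightarrow> dist3 \<Rightarrow> real" where
  "SIbar SI P = (SUP f :: nat \<Rightarrow> nat. SI (relabel f P))"

definition UIbar1 :: "(dist3 \<Rightarrow> real) \<Rightarrow> dist3 \<Rightarrow> real" where
  "UIbar1 SI P = I_S_X1 P - SIbar SI P"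

definition UIbar2 :: "(dist3 \<Rightarrow> real) \<Rightarrow> dist3 \<Rightarrow> real" where
  "UIbar2 SI P = I_S_X2 P - SIbar SI P"

definition CIbar :: "(dist3 \<Rightarrow> real) \<Rightarrow> dist3 \<Rightarrow> real" where
  "CIbar SI P = I_S_X12 P - SIbar SI P - UIbar1 SI P - UIbar2 SI P"

end

theory Submission
  imports Defs
begin

lemma logsum_ln:
  fixes a b :: "'i \<Rightarrow> real"
  assumes fin: "finite I" and pos: "\<And>i. i \<in> I \<Longrightarrow> a i > 0 \<and> b i > 0" and ne: "I \<noteq> {}"
  shows "sum a I * ln (sum a I / sum b I) \<le> (\<Sum>i\<in>I. a i * ln (a i / b i))"
proof -
  define A where "A = sum a I"
  define B where "B = sum b I"
  have A: "A > 0" unfolding A_def using fin ne pos by (intro sum_pos) auto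
  have B: "B > 0" unfolding B_def using fin ne pos by (intro sum_pos) auto
  have "(\<Sum>i\<in>I. a i * ln (a i / b i)) - A * ln (A / B)
      = (\<Sum>i\<in>I. a i * (ln (a i / b i) - ln (A / B)))"
    by (simp add: A_def sum_distrib_right sum_subtractf right_diff_distrib)
  also have "\<dots> = (\<Sum>i\<in>I. a i * (- ln ((b i * A) / (a i * B))))"
  proof (rule sum.cong[OF refl])
    fix i assume i: "i \<in> I"
    have ai: "a i > 0" and bi: "b i > 0" using pos[OF i] by auto
    have "ln ((b i * A) / (a i * B)) = ln (b i) + ln A - ln (a i) - ln B"
      using ai bi A B by (simp add: ln_div ln_mult)
    moreover have "ln (a i / b i) - ln (A / B) = ln (a i) - ln (b i) - ln A + ln B"
      using ai bi A B by (simp add: ln_div)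
    ultimately show "a i * (ln (a i / b i) - ln (A / B)) = a i * (- ln ((b i * A) / (a i * B)))"
      by simp
  qed
  also have "\<dots> \<ge> (\<Sum>i\<in>I. a i * (1 - (b i * A) / (a i * B)))"
  proof (rule sum_mono)
    fix i assume i: "i \<in> I"
    have ai: "a i > 0" and bi: "b i > 0" using pos[OF i] by auto
    have "ln ((b i * A) / (a i * B)) \<le> (b i * A) / (a i * B) - 1"
      by (rule ln_le_minus_one) (use ai bi A B in simp)
    then show "a i * (1 - (b i * A) / (a i * B)) \<le> a i * (- ln ((b i * A) / (a i * B)))"
      using ai by (intro mult_left_mono) auto
  qed
  also have "(\<Sum>i\<in>I. a i * (1 - (b i * A) / (a i * B))) = (\<Sum>i\<in>I. a i - b i * (A / B))"
  proof (rule sum.cong[OF refl])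
    fix i assume i: "i \<in> I"
    have ai: "a i > 0" using pos[OF i] by auto
    show "a i * (1 - (b i * A) / (a i * B)) = a i - b i * (A / B)"
      using ai B by (simp add: field_simps)
  qed
  also have "\<dots> = A - B * (A / B)"
    by (simp add: A_def B_def sum_subtractf sum_distrib_right sum_divide_distrib)
  also have "\<dots> = 0" using B by simp
  finally show ?thesis unfolding A_def B_def by simp
qed

lemma logsum_log2:
  fixes a b :: "'i \<Rightarrow> real"
  assumes fin: "finite I" and pos: "\<And>i. i \<in> I \<Longrightarrow> a i > 0 \<and> b i > 0" and ne: "I \<noteq> {}"
  shows "sum a I * log 2 (sum a I / sum b I) \<le> (\<Sum>i\<in>I. a i * log 2 (a i / b i))"
proof -
  have "sum a I * ln (sum a I / sum b I) / ln 2 \<le> (\<Sum>i\<in>I. a i * ln (a i / b i)) / ln 2"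
  proof -
    have l: "sum a I * ln (sum a I / sum b I) \<le> (\<Sum>i\<in>I. a i * ln (a i / b i))"
      using logsum_ln[of I a b] fin pos ne by blast
    have z: "(0::real) \<le> ln 2" using ln_ge_zero[of "2::real"] by simp
    show ?thesis using divide_right_mono[OF l z] .
  qed
  then show ?thesis by (simp add: log_def sum_divide_distrib)
qed


lemma mi_relabel:
  fixes q :: "('a \<times> 'b) pmf" and f :: "'a \<Rightarrow> 'c"
  assumes fin: "finite (set_pmf q)"
  shows "mi (map_pmf (\<lambda>(x, y). (f x, y)) q) \<le> mi q"
proof -
  define g where "g = (\<lambda>(x::'a, y::'b). (f x, y))"
  define q' where "q' = map_pmf g q"
  define S where "S = set_pmf q"
  define q1 where "q1 = map_pmf fst q"
  define q2 where "q2 = map_pmf snd q"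
  have S': "set_pmf q' = g ` S" by (simp add: q'_def S_def)
  have finS: "finite S" using fin by (simp add: S_def)
  have fin': "finite (set_pmf q')" using S' finS by simp
  have m2: "map_pmf snd q' = q2"
    unfolding q'_def q2_def map_pmf_comp by (rule map_pmf_cong) (auto simp: g_def split_beta)
  have m1: "map_pmf fst q' = map_pmf f q1"
    unfolding q'_def q1_def map_pmf_comp by (rule map_pmf_cong) (auto simp: g_def split_beta)
  define h where "h = (\<lambda>(x, y). pmf q (x, y) * log 2 (pmf q (x, y) / (pmf q1 x * pmf q2 y)))"
  define a where "a = (\<lambda>p. pmf q p)"
  define b where "b = (\<lambda>p. pmf q1 (fst p) * pmf q2 (snd p))"
  have hab: "h p = a p * log 2 (a p / b p)" for p
    by (cases p) (simp add: h_def a_def b_def)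
  have posab: "a p > 0 \<and> b p > 0" if "p \<in> S" for p
  proof -
    have "fst p \<in> set_pmf q1" "snd p \<in> set_pmf q2" using that by (auto simp: q1_def q2_def S_def)
    then show ?thesis using that unfolding a_def b_def S_def by (simp add: pmf_positive)
  qed
  have "mi q = sum h S" by (simp add: mi_def h_def q1_def q2_def S_def)
  also have "\<dots> = (\<Sum>ty\<in>set_pmf q'. sum h {p\<in>S. g p = ty})"
    by (rule sum.group[symmetric]) (use finS fin' S' in auto)
  finally have eq: "mi q = (\<Sum>ty\<in>set_pmf q'. sum h {p\<in>S. g p = ty})" .
  have "mi q' = (\<Sum>ty\<in>set_pmf q'. (case ty of (t, y) \<Rightarrow>
           pmf q' (t, y) * log 2 (pmf q' (t, y) / (pmf (map_pmf f q1) t * pmf q2 y))))"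
    by (simp add: mi_def m1 m2)
  also have "\<dots> \<le> (\<Sum>ty\<in>set_pmf q'. sum h {p\<in>S. g p = ty})"
  proof (rule sum_mono)
    fix ty assume ty: "ty \<in> set_pmf q'"
    obtain t y where tyd: "ty = (t, y)" by (cases ty)
    define J where "J = {p\<in>S. g p = (t, y)}"
    have finJ: "finite J" using finS by (simp add: J_def)
    have neJ: "J \<noteq> {}"
    proof -
      obtain p where "p \<in> S" "ty = g p" using ty S' by auto
      then have "p \<in> J" using tyd by (simp add: J_def)
      then show ?thesis by auto
    qed
    have sndJ: "snd p = y" if "p \<in> J" for p using that by (auto simp: J_def g_def split_beta)
    have fstJ: "f (fst p) = t" if "p \<in> J" for p using that by (auto simp: J_def g_def split_beta)
    have A: "pmf q' (t, y) = sum a J"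
    proof -
      have "pmf q' (t, y) = measure q (g -` {(t, y)})" by (simp add: q'_def pmf_map)
      also have "\<dots> = measure q (g -` {(t, y)} \<inter> set_pmf q)" by (simp add: measure_Int_set_pmf)
      also have "g -` {(t, y)} \<inter> set_pmf q = J" by (auto simp: J_def S_def)
      also have "measure q J = sum a J" using finJ by (simp add: measure_measure_pmf_finite a_def)
      finally show ?thesis .
    qed
    have Apos: "sum a J > 0" using finJ neJ posab by (intro sum_pos) (auto simp: J_def)
    have Bpos: "sum b J > 0" using finJ neJ posab by (intro sum_pos) (auto simp: J_def)
    have inj: "inj_on fst J" using sndJ by (intro inj_onI) (metis prod.collapse)
    have B: "sum b J = (\<Sum>p\<in>J. pmf q1 (fst p)) * pmf q2 y"
      unfolding b_def sum_distrib_right using sndJ by (intro sum.cong) auto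
    have "(\<Sum>p\<in>J. pmf q1 (fst p)) = sum (pmf q1) (fst ` J)"
      using sum.reindex[OF inj, of "pmf q1"] by simp
    also have "\<dots> = measure q1 (fst ` J)" using finJ by (simp add: measure_measure_pmf_finite)
    also have "\<dots> \<le> measure q1 (f -` {t})"
      using fstJ by (intro measure_pmf.finite_measure_mono) auto
    also have "\<dots> = pmf (map_pmf f q1) t" by (simp add: pmf_map)
    finally have D1: "(\<Sum>p\<in>J. pmf q1 (fst p)) \<le> pmf (map_pmf f q1) t" .
    have D: "sum b J \<le> pmf (map_pmf f q1) t * pmf q2 y"
      unfolding B by (rule mult_right_mono[OF D1]) simp
    have "pmf q' (t, y) * log 2 (pmf q' (t, y) / (pmf (map_pmf f q1) t * pmf q2 y))
          \<le> sum a J * log 2 (sum a J / sum b J)"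
      unfolding A
    proof (rule mult_left_mono)
      show "log 2 (sum a J / (pmf (map_pmf f q1) t * pmf q2 y)) \<le> log 2 (sum a J / sum b J)"
        using Apos Bpos D by (intro log_le_cancel_iff[THEN iffD2]) (auto intro: divide_left_mono divide_pos_pos)
    qed (use Apos in simp)
    also have "\<dots> \<le> (\<Sum>p\<in>J. a p * log 2 (a p / b p))"
      using finJ neJ posab by (intro logsum_log2) (auto simp: J_def)
    also have "\<dots> = sum h J" by (simp add: hab)
    finally show "(case ty of (t, y) \<Rightarrow>
           pmf q' (t, y) * log 2 (pmf q' (t, y) / (pmf (map_pmf f q1) t * pmf q2 y)))
         \<le> sum h {p\<in>S. g p = ty}" by (simp add: tyd J_def)
  qed
  finally show ?thesis using eq by (simp add: q'_def g_def)
qed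


lemma relabel_I1: "I_S_X1 (relabel f P) = mi (map_pmf (\<lambda>(x, y). (f x, y)) (map_pmf (\<lambda>(s, x1, x2). (s, x1)) P))"
  unfolding I_S_X1_def relabel_def map_pmf_comp by (rule arg_cong[where f=mi], rule map_pmf_cong) auto

lemma relabel_I2: "I_S_X2 (relabel f P) = mi (map_pmf (\<lambda>(x, y). (f x, y)) (map_pmf (\<lambda>(s, x1, x2). (s, x2)) P))"
  unfolding I_S_X2_def relabel_def map_pmf_comp by (rule arg_cong[where f=mi], rule map_pmf_cong) auto

lemma I1_mono: "finite (set_pmf P) \<Longrightarrow> I_S_X1 (relabel f P) \<le> I_S_X1 P"
  unfolding relabel_I1 by (subst I_S_X1_def, rule mi_relabel) simp

lemma I2_mono: "finite (set_pmf P) \<Longrightarrow> I_S_X2 (relabel f P) \<le> I_S_X2 P"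
  unfolding relabel_I2 by (subst I_S_X2_def, rule mi_relabel) simp

lemma relabel_id: "relabel id P = P"
proof -
  have "(\<lambda>(s, x1, x2). (id s, x1, x2)) = (id :: nat \<times> nat \<times> nat \<Rightarrow> _)" by auto
  then show ?thesis unfolding relabel_def by (simp add: map_pmf_id)
qed

lemma relabel_fin: "finite (set_pmf P) \<Longrightarrow> finite (set_pmf (relabel f P))"
  by (simp add: relabel_def)

theorem lemma2:
  fixes SI UI1 UI2 CI :: "dist3 \<Rightarrow> real" and P :: dist3
  assumes "nonneg_decomp SI UI1 UI2 CI"
    and "finite (set_pmf P)"
  shows "SIbar SI P \<ge> 0 \<and> UIbar1 SI P \<ge> 0 \<and> UIbar2 SI P \<ge> 0 \<and> CIbar SI P \<ge> 0 \<and>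
         SIbar SI P \<ge> SI P \<and>
         CIbar SI P \<ge> CI P \<and>
         (\<forall>f. SI (relabel f P) = SIbar SI P \<longrightarrow>
               UI1 (relabel f P) \<le> UIbar1 SI P \<and> UIbar1 SI P \<le> UI1 P)"
proof -
  have D: "\<And>Q. finite (set_pmf Q) \<Longrightarrow>
        SI Q \<ge> 0 \<and> UI1 Q \<ge> 0 \<and> UI2 Q \<ge> 0 \<and> CI Q \<ge> 0 \<and>
        I_S_X12 Q = SI Q + CI Q + UI1 Q + UI2 Q \<and>
        I_S_X1 Q = SI Q + UI1 Q \<and> I_S_X2 Q = SI Q + UI2 Q"
    using assms(1) unfolding nonneg_decomp_def by blast
  have fin: "finite (set_pmf P)" by fact
  have b1: "SI (relabel f P) \<le> I_S_X1 P" for f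
    using D[OF relabel_fin[OF fin, of f]] I1_mono[OF fin, of f] by linarith
  have b2: "SI (relabel f P) \<le> I_S_X2 P" for f
    using D[OF relabel_fin[OF fin, of f]] I2_mono[OF fin, of f] by linarith
  have bdd: "bdd_above (range (\<lambda>f. SI (relabel f P)))"
    using b1 by (intro bdd_aboveI) auto
  have lo: "SI P \<le> SIbar SI P"
    unfolding SIbar_def using cSUP_upper[OF UNIV_I bdd, of id] by (simp add: relabel_id)
  have h1: "SIbar SI P \<le> I_S_X1 P"
    unfolding SIbar_def by (rule cSUP_least) (use b1 in auto)
  have h2: "SIbar SI P \<le> I_S_X2 P"
    unfolding SIbar_def by (rule cSUP_least) (use b2 in auto)
  have DP: "SI P \<ge> 0 \<and> UI1 P \<ge> 0 \<and> UI2 P \<ge> 0 \<and> CI P \<ge> 0 \<and>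
        I_S_X12 P = SI P + CI P + UI1 P + UI2 P \<and>
        I_S_X1 P = SI P + UI1 P \<and> I_S_X2 P = SI P + UI2 P" using D[OF fin] .
  have c: "\<forall>f. SI (relabel f P) = SIbar SI P \<longrightarrow>
               UI1 (relabel f P) \<le> UIbar1 SI P \<and> UIbar1 SI P \<le> UI1 P"
  proof (intro allI impI conjI)
    fix f assume e: "SI (relabel f P) = SIbar SI P"
    show "UI1 (relabel f P) \<le> UIbar1 SI P"
      using D[OF relabel_fin[OF fin, of f]] I1_mono[OF fin, of f] e unfolding UIbar1_def by linarith
    show "UIbar1 SI P \<le> UI1 P" using lo DP unfolding UIbar1_def by linarith
  qed
  have ar: "SIbar SI P \<ge> 0 \<and> UIbar1 SI P \<ge> 0 \<and> UIbar2 SI P \<ge> 0 \<and> CIbar SI P \<ge> 0 \<and>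
         SIbar SI P \<ge> SI P \<and> CIbar SI P \<ge> CI P"
    using lo h1 h2 DP unfolding UIbar1_def UIbar2_def CIbar_def by (intro conjI; linarith)
  show ?thesis using ar c by blast
qed

end
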